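(* Let $M=2Z+1$ with $Z\ge 1$ an integer, and let $\gamma_1,\dots,\gamma_{M-1}$ be nonzero real numbers and $J_1,\dots,J_{M-1}$ real numbers. Consider $$H_{\gamma J}=\sum_{m=1}^{M-1}\Big(J_m c_{m+1}^\dagger c_m\sigma_{m+1}^+ + \text{h.c.}\Big) - \sum_{m=1}^{M-1}\Big(\gamma_m c_{m+1}^\dagger c_m + \text{h.c.}\Big)$$ on the open chain of $M$ sites. Then the subspace of states with exactly one fermion and with spin on site $1$ equal to $|\uparrow\rangle$ contains $2^{M-1}$ linearly independent states $|\Psi\rangle$ with $H_{\gamma J}|\Psi\rangle=0$.
   Context: Each site $m=1,\dots,M$ carries one spinless fermion mode ($c_m,c_m^\dagger$, canonical anticommutation relations) and one spin-$1/2$ with Pauli matrices $\sigma_m^{x,y,z}$; $\sigma_m^{\pm}=\sigma_m^x\pm i\sigma_m^y$. The Hilbert space is the tensor product of the fermionic Fock space and the $M$ spin spaces; $H_{\gamma J}$ conserves the fermion number $\sum_m c_m^\dagger c_m$ and does not act on the spin at site $1$. *)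

theory Defs
  imports Complex_Main "HOL-Library.Function_Algebras"
begin

text \<open>Fock basis of M fermion modes times M spins-1/2: a basis vector is a pair (n, s),
  n = set of occupied fermion sites, s = set of sites whose spin is up (both subsets of {1..M}).\<close>

type_synonym state = "(nat set \<times> nat set) \<Rightarrow> complex"

definition valid_state :: "nat \<Rightarrow> state \<Rightarrow> bool" where
  "valid_state M \<psi> \<longleftrightarrow> (\<forall>n s. \<psi> (n, s) \<noteq> 0 \<longrightarrow> n \<subseteq> {1..M} \<and> s \<subseteq> {1..M})"

definition jw_sign :: "nat set \<Rightarrow> nat \<Rightarrow> complex" where
  "jw_sign n m = (-1) ^ card {j \<in> n. j < m}"

text \<open>c_m^dagger |n> = sign |n + {m}> (m not in n), else 0; operators act on coefficient functions.\<close>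
definition cdag :: "nat \<Rightarrow> state \<Rightarrow> state" where
  "cdag m \<psi> = (\<lambda>(n, s). if m \<in> n then jw_sign n m * \<psi> (n - {m}, s) else 0)"

text \<open>c_m |n> = sign |n - {m}> (m in n), else 0.\<close>
definition cann :: "nat \<Rightarrow> state \<Rightarrow> state" where
  "cann m \<psi> = (\<lambda>(n, s). if m \<notin> n then jw_sign n m * \<psi> (insert m n, s) else 0)"

text \<open>sigma^+ = sigma^x + i sigma^y = 2 |up><down|.\<close>
definition sig_plus :: "nat \<Rightarrow> state \<Rightarrow> state" where
  "sig_plus m \<psi> = (\<lambda>(n, s). if m \<in> s then 2 * \<psi> (n, s - {m}) else 0)"

text \<open>sigma^- = sigma^x - i sigma^y = 2 |down><up|.\<close>
definition sig_minus :: "nat \<Rightarrow> state \<Rightarrow> state" where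
  "sig_minus m \<psi> = (\<lambda>(n, s). if m \<notin> s then 2 * \<psi> (n, insert m s) else 0)"

definition H_gJ :: "nat \<Rightarrow> (nat \<Rightarrow> real) \<Rightarrow> (nat \<Rightarrow> real) \<Rightarrow> state \<Rightarrow> state" where
  "H_gJ M \<gamma> J \<psi> = (\<lambda>x.
      (\<Sum>m=1..M-1. complex_of_real (J m) *
          (cdag (m+1) (cann m (sig_plus (m+1) \<psi>)) x + cdag m (cann (m+1) (sig_minus (m+1) \<psi>)) x))
    - (\<Sum>m=1..M-1. complex_of_real (\<gamma> m) *
          (cdag (m+1) (cann m \<psi>) x + cdag m (cann (m+1) \<psi>) x)))"

definition one_fermion_up1 :: "state \<Rightarrow> bool" where
  "one_fermion_up1 \<psi> \<longleftrightarrow> (\<forall>n s. \<psi> (n, s) \<noteq> 0 \<longrightarrow> card n = 1 \<and> 1 \<in> s)"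

abbreviation lin_indep_states :: "state set \<Rightarrow> bool" where
  "lin_indep_states S \<equiv> \<not> module.dependent (\<lambda>(c::complex) (f::state) x. c * f x) S"

end

theory Submission
  imports Defs
begin

lemma sum_fun_app: "(\<Sum>v\<in>T. (f v :: 'a \<Rightarrow> 'b::comm_monoid_add)) x = (\<Sum>v\<in>T. f v x)"
  by (induction T rule: infinite_finite_induct) auto

lemma module_pw: "module (\<lambda>(c::complex) (f::state) x. c * f x)"
  by unfold_locales (auto simp: fun_eq_iff algebra_simps)

definition single :: "state \<Rightarrow> bool" where
  "single \<phi> \<longleftrightarrow> (\<forall>n s. \<phi> (n, s) \<noteq> 0 \<longrightarrow> (\<exists>k. n = {k}))"

lemma hop:
  assumes "single \<phi>" "a \<noteq> b"
  shows "cdag a (cann b \<phi>) (n, s) = (if n = {a} then \<phi> ({b}, s) else 0)"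
proof (cases "n = {a}")
  case True
  have "{j \<in> {a}. j < a} = {}" by auto
  then have "jw_sign {a} a = 1" unfolding jw_sign_def by (simp only: card.empty) simp
  then show ?thesis using True assms by (simp add: cdag_def cann_def jw_sign_def[of "{}"])
next
  case False
  have "\<phi> (insert b (n - {a}), s) = 0" if "a \<in> n" "b \<notin> n - {a}"
  proof (rule ccontr)
    assume "\<phi> (insert b (n - {a}), s) \<noteq> 0"
    then obtain k where k: "insert b (n - {a}) = {k}" using assms(1) unfolding single_def by blast
    then have "n - {a} = {}" using that by auto
    then show False using False that by auto
  qed
  then show ?thesis using False by (auto simp: cdag_def cann_def)
qed

lemma single_sp: "single \<phi> \<Longrightarrow> single (sig_plus m \<phi>)"
  unfolding single_def sig_plus_def by (auto split: if_splits)

lemma single_sm: "single \<phi> \<Longrightarrow> single (sig_minus m \<phi>)"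
  unfolding single_def sig_minus_def by (auto split: if_splits)

definition Rf :: "(nat \<Rightarrow> real) \<Rightarrow> (nat \<Rightarrow> real) \<Rightarrow> nat \<Rightarrow> (nat set \<Rightarrow> complex) \<Rightarrow> nat set \<Rightarrow> complex" where
  "Rf \<gamma> J j h s = of_real (J (2*j+1)) * (if 2*j+2 \<in> s then 2 * h (s - {2*j+2}) else 0)
      - of_real (\<gamma> (2*j+1)) * h s"

primrec gg :: "(nat \<Rightarrow> real) \<Rightarrow> (nat \<Rightarrow> real) \<Rightarrow> nat set \<Rightarrow> nat \<Rightarrow> nat set \<Rightarrow> complex" where
  "gg \<gamma> J t 0 s = (if s = insert 1 t then 1 else 0)"
| "gg \<gamma> J t (Suc j) s = (Rf \<gamma> J j (gg \<gamma> J t j) s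
     + (if 2*j+3 \<notin> s then 2 * of_real (J (2*j+2)) * Rf \<gamma> J j (gg \<gamma> J t j) (insert (2*j+3) s)
            / of_real (\<gamma> (2*j+2)) else 0)) / of_real (\<gamma> (2*j+2))"

definition psi :: "nat \<Rightarrow> (nat \<Rightarrow> real) \<Rightarrow> (nat \<Rightarrow> real) \<Rightarrow> nat set \<Rightarrow> state" where
  "psi M \<gamma> J t = (\<lambda>(n, s). if (\<exists>k. n = {k} \<and> odd k \<and> k \<le> M)
      then gg \<gamma> J t ((the_elem n - 1) div 2) s else 0)"

lemma psi_single: "psi M \<gamma> J t ({k}, s) = (if odd k \<and> k \<le> M then gg \<gamma> J t ((k - 1) div 2) s else 0)"
  unfolding psi_def by auto

lemma psi_is_single: "single (psi M \<gamma> J t)"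
  unfolding single_def psi_def by (auto split: if_splits)

lemma gg_vanish:
  assumes "t \<subseteq> {2..M}" "M = 2 * Z + 1"
  shows "j \<le> Z \<Longrightarrow> \<not> (1 \<in> s \<and> s \<subseteq> {1..M}) \<Longrightarrow> gg \<gamma> J t j s = 0"
proof (induction j arbitrary: s)
  case 0
  then show ?case using assms by auto
next
  case (Suc j)
  have R0: "Rf \<gamma> J j (gg \<gamma> J t j) s' = 0" if "\<not> (1 \<in> s' \<and> s' \<subseteq> {1..M})" for s'
  proof -
    have "\<not> (1 \<in> s' - {2*j+2} \<and> s' - {2*j+2} \<subseteq> {1..M})" using that Suc.prems assms by auto
    then show ?thesis using that Suc by (simp add: Rf_def)
  qed
  have "\<not> (1 \<in> insert (2*j+3) s \<and> insert (2*j+3) s \<subseteq> {1..M})" using Suc.prems assms by auto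
  then show ?case using R0[of s] R0[of "insert (2*j+3) s"] Suc.prems by simp
qed

lemma sum_delta_suc:
  assumes "finite A"
  shows "(\<Sum>m\<in>A. if m + 1 = (k::nat) then f m else 0) = (if k \<ge> 1 \<and> k - 1 \<in> A then f (k - 1) else (0::complex))"
proof -
  have "(\<Sum>m\<in>A. if m + 1 = k then f m else 0) = (\<Sum>m\<in>A. if k \<ge> 1 \<and> m = k - 1 then f m else 0)"
    by (rule sum.cong) auto
  also have "\<dots> = (\<Sum>m\<in>A. if m = k - 1 then (if k \<ge> 1 then f m else 0) else 0)"
    by (rule sum.cong) auto
  also have "\<dots> = (if k \<ge> 1 \<and> k - 1 \<in> A then f (k - 1) else 0)"
    using assms by (simp add: sum.delta')
  finally show ?thesis .
qed

lemma sum_delta_eq: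
  assumes "finite A"
  shows "(\<Sum>m\<in>A. if m = k then f m else 0) = (if k \<in> A then f k else (0::complex))"
  using assms by (simp add: sum.delta')

lemma H_single:
  assumes "single \<phi>"
  shows "H_gJ M \<gamma> J \<phi> ({k}, s) =
     (if k \<ge> 1 \<and> k - 1 \<in> {1..M-1} then of_real (J (k-1)) * sig_plus k \<phi> ({k-1}, s) - of_real (\<gamma> (k-1)) * \<phi> ({k-1}, s) else 0)
   + (if k \<in> {1..M-1} then of_real (J k) * sig_minus (k+1) \<phi> ({k+1}, s) - of_real (\<gamma> k) * \<phi> ({k+1}, s) else 0)"
proof -
  have "H_gJ M \<gamma> J \<phi> ({k}, s) =
     (\<Sum>m=1..M-1. (if m + 1 = k then of_real (J m) * sig_plus (m+1) \<phi> ({m}, s) else 0)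
        + (if m = k then of_real (J m) * sig_minus (m+1) \<phi> ({m+1}, s) else 0))
   - (\<Sum>m=1..M-1. (if m + 1 = k then of_real (\<gamma> m) * \<phi> ({m}, s) else 0)
        + (if m = k then of_real (\<gamma> m) * \<phi> ({m+1}, s) else 0))"
    unfolding H_gJ_def using assms
    by (intro arg_cong2[where f="(-)"] sum.cong refl)
       (auto simp: hop single_sp single_sm algebra_simps)
  also have "\<dots> = (if k \<ge> 1 \<and> k - 1 \<in> {1..M-1} then of_real (J (k-1)) * sig_plus (k - 1 + 1) \<phi> ({k-1}, s) else 0)
      + (if k \<in> {1..M-1} then of_real (J k) * sig_minus (k+1) \<phi> ({k+1}, s) else 0)
      - ((if k \<ge> 1 \<and> k - 1 \<in> {1..M-1} then of_real (\<gamma> (k-1)) * \<phi> ({k-1}, s) else 0)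
      + (if k \<in> {1..M-1} then of_real (\<gamma> k) * \<phi> ({k+1}, s) else 0))"
    by (simp only: sum.distrib sum_delta_suc[OF finite_atLeastAtMost] sum_delta_eq[OF finite_atLeastAtMost])
  finally show ?thesis by auto
qed

lemma H_nonsingle:
  assumes "single \<phi>" "\<not> (\<exists>k. n = {k})"
  shows "H_gJ M \<gamma> J \<phi> (n, s) = 0"
proof -
  have n: "\<And>a. n \<noteq> {a}" using assms(2) by blast
  have a: "\<And>m. cdag (m+1) (cann m (sig_plus (m+1) \<phi>)) (n, s) = 0"
    using hop[OF single_sp[OF assms(1)]] n by simp
  have b: "\<And>m. cdag m (cann (m+1) (sig_minus (m+1) \<phi>)) (n, s) = 0"
    using hop[OF single_sm[OF assms(1)]] n by simp
  have c: "\<And>m. cdag (m+1) (cann m \<phi>) (n, s) = 0"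
    using hop[OF assms(1)] n by simp
  have d: "\<And>m. cdag m (cann (m+1) \<phi>) (n, s) = 0"
    using hop[OF assms(1)] n by simp
  show ?thesis unfolding H_gJ_def by (simp only: a b c d) simp
qed

lemma psi_zero:
  assumes "M = 2 * Z + 1" "\<forall>m\<in>{1..M-1}. \<gamma> m \<noteq> 0"
  shows "H_gJ M \<gamma> J (psi M \<gamma> J t) = 0"
proof (rule ext)
  fix x :: "nat set \<times> nat set"
  obtain n s where x: "x = (n, s)" by (cases x)
  show "H_gJ M \<gamma> J (psi M \<gamma> J t) x = 0 x"
  proof (cases "\<exists>k. n = {k}")
    case False
    then show ?thesis using x H_nonsingle[OF psi_is_single] by simp
  next
    case True
    then obtain k where n: "n = {k}" by blast
    let ?p = "psi M \<gamma> J t"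
    have sp: "sig_plus k ?p ({k-1}, s) = (if k \<in> s then 2 * ?p ({k-1}, s - {k}) else 0)"
      by (simp add: sig_plus_def)
    have sm: "sig_minus (k+1) ?p ({k+1}, s) = (if k+1 \<notin> s then 2 * ?p ({k+1}, insert (k+1) s) else 0)"
      by (simp add: sig_minus_def)
    have H: "H_gJ M \<gamma> J ?p (n, s) =
     (if k \<ge> 1 \<and> k - 1 \<in> {1..M-1} then of_real (J (k-1)) * (if k \<in> s then 2 * ?p ({k-1}, s - {k}) else 0) - of_real (\<gamma> (k-1)) * ?p ({k-1}, s) else 0)
   + (if k \<in> {1..M-1} then of_real (J k) * (if k+1 \<notin> s then 2 * ?p ({k+1}, insert (k+1) s) else 0) - of_real (\<gamma> k) * ?p ({k+1}, s) else 0)"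
      unfolding n H_single[OF psi_is_single] sp sm by simp
    consider "odd k" | "even k" "2 \<le> k" "k \<le> M - 1" | "even k" "k = 0 \<or> k \<ge> M + 1"
    proof -
      have "odd k \<or> (even k \<and> 2 \<le> k \<and> k \<le> M - 1) \<or> (even k \<and> (k = 0 \<or> k \<ge> M + 1))"
        using assms(1) by presburger
      then show "(odd k \<Longrightarrow> thesis) \<Longrightarrow> (even k \<Longrightarrow> 2 \<le> k \<Longrightarrow> k \<le> M - 1 \<Longrightarrow> thesis) \<Longrightarrow> (even k \<Longrightarrow> k = 0 \<or> k \<ge> M + 1 \<Longrightarrow> thesis) \<Longrightarrow> thesis" by blast
    qed
    then show ?thesis
    proof cases
      case 1
      then have "\<not> odd (k - 1) \<or> k = 0" "\<not> odd (k + 1)" by presburger+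
      then show ?thesis using x H by (auto simp: psi_single)
    next
      case 2
      then obtain i where "k = 2 * i" by (auto elim: evenE)
      with 2 have k: "k = 2 * (i - 1) + 2" by simp
      define j where "j = i - 1"
      have k: "k = 2 * j + 2" using k j_def by simp
      have g: "\<gamma> (2*j+2) \<noteq> 0" using assms(2) 2 k by auto
      have e1: "(2 * j + 2 - 1 - 1) div 2 = j" "(2 * j + 2 + 1 - 1) div 2 = Suc j" by simp_all
      have o: "odd (2*j+2-1)" "odd (2*j+2+1)" "2*j+2-1 \<le> M" "2*j+2+1 \<le> M" "2*j+2-1 = 2*j+1" "2*j+2+1 = 2*j+3"
        using 2 k assms(1) by simp_all
      have p1: "\<And>s'. ?p ({2*j+1}, s') = gg \<gamma> J t j s'" using o by (simp add: psi_single)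
      have p3: "\<And>s'. ?p ({2*j+3}, s') = gg \<gamma> J t (Suc j) s'" using o
        by (simp add: psi_single)
      have c1: "k \<ge> 1 \<and> k - 1 \<in> {1..M-1}" "k \<in> {1..M-1}" using 2 k by auto
      have H2: "H_gJ M \<gamma> J ?p (n, s) = Rf \<gamma> J j (gg \<gamma> J t j) s
         + (of_real (J (2*j+2)) * (if 2*j+3 \<notin> s then 2 * gg \<gamma> J t (Suc j) (insert (2*j+3) s) else 0)
            - of_real (\<gamma> (2*j+2)) * gg \<gamma> J t (Suc j) s)"
        unfolding H using c1 o(5,6) p1 p3 by (simp only: if_True Rf_def k) simp
      have e3: "gg \<gamma> J t (Suc j) (insert (2*j+3) s) = Rf \<gamma> J j (gg \<gamma> J t j) (insert (2*j+3) s) / of_real (\<gamma> (2*j+2))"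
        by simp
      have e4: "gg \<gamma> J t (Suc j) s = (Rf \<gamma> J j (gg \<gamma> J t j) s
     + (if 2*j+3 \<notin> s then 2 * of_real (J (2*j+2)) * Rf \<gamma> J j (gg \<gamma> J t j) (insert (2*j+3) s)
            / of_real (\<gamma> (2*j+2)) else 0)) / of_real (\<gamma> (2*j+2))" by (rule gg.simps(2))
      have "H_gJ M \<gamma> J ?p (n, s) = 0"
        unfolding H2 e3 e4 using g by (cases "2*j+3 \<in> s") (simp_all add: field_simps)
      then show ?thesis using x by simp
    next
      case 3
      then show ?thesis using x H by auto
    qed
  qed
qed

lemma psi_base:
  assumes "t \<subseteq> {2..M}" "t' \<subseteq> {2..M}" "1 \<le> M"
  shows "psi M \<gamma> J t' ({1}, insert 1 t) = (if t' = t then 1 else 0)"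
proof -
  have "1 \<notin> t" "1 \<notin> t'" using assms by auto
  then have e: "(insert 1 t = insert 1 t') = (t' = t)" by (metis Diff_insert_absorb)
  have "psi M \<gamma> J t' ({1}, insert 1 t) = gg \<gamma> J t' 0 (insert 1 t)"
    using assms(3) by (simp only: psi_single) simp
  also have "\<dots> = (if t' = t then 1 else 0)" by (simp only: gg.simps(1) e)
  finally show ?thesis .
qed

lemma main_aux:
  fixes Z M :: nat and \<gamma> J :: "nat \<Rightarrow> real"
  assumes "Z \<ge> 1" and "M = 2 * Z + 1"
    and "\<forall>m\<in>{1..M-1}. \<gamma> m \<noteq> 0"
  shows "\<exists>S. S \<subseteq> {\<psi>. valid_state M \<psi> \<and> one_fermion_up1 \<psi> \<and> H_gJ M \<gamma> J \<psi> = 0}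
            \<and> finite S \<and> card S = 2 ^ (M - 1) \<and> lin_indep_states S"
proof -
  define T where "T = {t. t \<subseteq> {2..M}}"
  define S where "S = psi M \<gamma> J ` T"
  have M1: "(1::nat) \<le> M" using assms by simp
  have inj: "inj_on (psi M \<gamma> J) T"
  proof (rule inj_onI)
    fix t t' assume tt: "t \<in> T" "t' \<in> T" "psi M \<gamma> J t = psi M \<gamma> J t'"
    then have "psi M \<gamma> J t ({1}, insert 1 t) = psi M \<gamma> J t' ({1}, insert 1 t)" by simp
    moreover have "psi M \<gamma> J t ({1}, insert 1 t) = 1"
      using tt psi_base[of t M t \<gamma> J, OF _ _ M1] unfolding T_def by simp
    moreover have "psi M \<gamma> J t' ({1}, insert 1 t) = (if t' = t then 1 else 0)"
      using tt psi_base[of t M t' \<gamma> J, OF _ _ M1] unfolding T_def by simp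
    ultimately show "t = t'" by (metis zero_neq_one)
  qed
  have sub: "S \<subseteq> {\<psi>. valid_state M \<psi> \<and> one_fermion_up1 \<psi> \<and> H_gJ M \<gamma> J \<psi> = 0}"
  proof
    fix \<psi> assume "\<psi> \<in> S"
    then obtain t where t: "t \<subseteq> {2..M}" and p: "\<psi> = psi M \<gamma> J t" unfolding S_def T_def by auto
    have nz: "\<exists>k. n = {k} \<and> 1 \<le> k \<and> k \<le> M \<and> 1 \<in> s \<and> s \<subseteq> {1..M}" if nz0: "\<psi> (n, s) \<noteq> 0" for n s
    proof -
      obtain k where n: "n = {k}" using nz0 psi_is_single[of M \<gamma> J t] p unfolding single_def by blast
      have k: "odd k" "k \<le> M" and g: "gg \<gamma> J t ((k - 1) div 2) s \<noteq> 0"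
        using nz0 p n by (auto simp: psi_single split: if_splits)
      have "(k - 1) div 2 \<le> Z" using k assms(2) by simp
      then have "1 \<in> s \<and> s \<subseteq> {1..M}" using gg_vanish[OF t assms(2)] g by blast
      moreover have "1 \<le> k" using k by (cases k) auto
      ultimately show ?thesis using n k by auto
    qed
    have "valid_state M \<psi>" unfolding valid_state_def using nz by fastforce
    moreover have "one_fermion_up1 \<psi>" unfolding one_fermion_up1_def using nz by fastforce
    moreover have "H_gJ M \<gamma> J \<psi> = 0" using p psi_zero[OF assms(2,3)] by simp
    ultimately show "\<psi> \<in> {\<psi>. valid_state M \<psi> \<and> one_fermion_up1 \<psi> \<and> H_gJ M \<gamma> J \<psi> = 0}" by simp
  qed
  have fin: "finite S" unfolding S_def T_def by simp
  have "card T = 2 ^ (M - 1)"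
  proof -
    have "T = Pow {2..M}" unfolding T_def by auto
    then show ?thesis by (simp add: card_Pow)
  qed
  then have card: "card S = 2 ^ (M - 1)" unfolding S_def using card_image[OF inj] by simp
  have ind: "lin_indep_states S"
  proof
    assume dep: "module.dependent (\<lambda>(c::complex) (f::state) x. c * f x) S"
    obtain U u v where U: "finite U" "U \<subseteq> S" and sum0: "(\<Sum>v\<in>U. (\<lambda>x. u v * v x)) = 0"
      and v: "v \<in> U" "u v \<noteq> 0"
      using dep unfolding module.dependent_explicit[OF module_pw] by auto
    obtain t where t: "t \<in> T" "v = psi M \<gamma> J t" using v U unfolding S_def by auto
    have "0 = (\<Sum>v\<in>U. (\<lambda>x. u v * v x)) ({1}, insert 1 t)" using sum0 by simp
    also have "\<dots> = (\<Sum>w\<in>U. u w * w ({1}, insert 1 t))" by (simp add: sum_fun_app)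
    also have "\<dots> = (\<Sum>w\<in>U. if w = v then u w else 0)"
    proof (rule sum.cong[OF refl])
      fix w assume "w \<in> U"
      then obtain t' where t': "t' \<in> T" "w = psi M \<gamma> J t'" using U unfolding S_def by auto
      have "(w = v) = (t' = t)" using inj t t' by (auto dest: inj_onD)
      then show "u w * w ({1}, insert 1 t) = (if w = v then u w else 0)"
        using t t' psi_base[of t M t' \<gamma> J, OF _ _ M1] unfolding T_def by auto
    qed
    also have "\<dots> = u v" using U v by (simp add: sum.delta')
    finally show False using v by simp
  qed
  show ?thesis using sub fin card ind by blast
qed

thm_deps main_aux

theorem mainTheorem2:
  fixes Z M :: nat and \<gamma> J :: "nat \<Rightarrow> real"
  assumes "Z \<ge> 1" and "M = 2 * Z + 1"
    and "\<forall>m\<in>{1..M-1}. \<gamma> m \<noteq> 0"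
  shows "\<exists>S. S \<subseteq> {\<psi>. valid_state M \<psi> \<and> one_fermion_up1 \<psi> \<and> H_gJ M \<gamma> J \<psi> = 0}
            \<and> finite S \<and> card S = 2 ^ (M - 1) \<and> lin_indep_states S"
  using assms by (rule main_aux)

end
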